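(* Suppose $a\in C^2(\mathbb{R})$. Let $\tilde\alpha\in\mathbb{R}^2$ be such that $a'(\tilde\alpha_2)>0$. Given $s_0,t_0>0$ sufficiently small depending on the function $a$ and $\tilde\alpha_2$, there exists $0<\epsilon_0<1$ sufficiently small such that for all $0<\epsilon\leq \epsilon_0$, the system \begin{equation*} G^{\epsilon}(\gamma)=0 \end{equation*} has a non-negative solution.
   Context: Let $a:\mathbb{R}\to\mathbb{R}$, $F(\xi)=\int_0^\xi a(s)\,ds$, and for $\alpha\in\mathbb{R}^2$ let $$P_1^{\alpha}(u,v):=\begin{pmatrix} u-\alpha_1 & v-\alpha_2 \\ a(v)-a(\alpha_2) & u-\alpha_1\\ (u-\alpha_1)(a(v)-a(\alpha_2)) & \frac{(u-\alpha_1)^2}{2}+F(v)-F(\alpha_2)-a(\alpha_2)(v-\alpha_2) \end{pmatrix}.$$ Given $s_0,t_0>0$ set $\zeta_1:=P_1^{\tilde\alpha}(\tilde\alpha_1+s_0,\tilde\alpha_2)$, $\zeta_2:=P_1^{\tilde\alpha}(\tilde\alpha_1-s_0,\tilde\alpha_2)$, $\zeta_3:=P_1^{\tilde\alpha}(\tilde\alpha_1,\tilde\alpha_2+t_0)$, $\zeta_4:=P_1^{\tilde\alpha}(\tilde\alpha_1,\tilde\alpha_2-t_0)$. Let $D_1,D_2,D_3$ denote the $(1,2)$, $(2,3)$, $(1,3)$ row-minors of a $3\times 2$ matrix, respectively. Let $A\in M^{4\times 4}$ be the matrix whose $j$-th column is $(D_1(\zeta_j),D_2(\zeta_j),D_3(\zeta_j),1)^T$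 for $j=1,2,3,4$. For $\epsilon>0$ and $\gamma\in\mathbb{R}^4$ define $L^{\epsilon}(\gamma):=A\gamma-(0,0,0,\epsilon)^T$, $Q(\gamma):=\left(D_1\left(\sum_{j=1}^4[\gamma]_j\zeta_j\right),D_2\left(\sum_{j=1}^4[\gamma]_j\zeta_j\right),D_3\left(\sum_{j=1}^4[\gamma]_j\zeta_j\right),0\right)^T$, and $G^{\epsilon}(\gamma):=L^{\epsilon}(\gamma)-Q(\gamma)$. *)

theory Defs
  imports "HOL-Analysis.Analysis"
begin

definition C2_fun :: "(real \<Rightarrow> real) \<Rightarrow> bool" where
  "C2_fun a \<longleftrightarrow> (\<forall>x. a differentiable (at x)) \<and> (\<forall>x. deriv a differentiable (at x))
     \<and> continuous_on UNIV (deriv (deriv a))"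

definition Fint :: "(real \<Rightarrow> real) \<Rightarrow> real \<Rightarrow> real" where
  "Fint a \<xi> = (if 0 \<le> \<xi> then integral {0..\<xi>} a else - integral {\<xi>..0} a)"

definition P1 :: "(real \<Rightarrow> real) \<Rightarrow> real \<Rightarrow> real \<Rightarrow> real \<Rightarrow> real \<Rightarrow> real^2^3" where
  "P1 a al1 al2 u v = vector [
      vector [u - al1, v - al2],
      vector [a v - a al2, u - al1],
      vector [(u - al1) * (a v - a al2),
              (u - al1)^2 / 2 + Fint a v - Fint a al2 - a al2 * (v - al2)]]"

definition D1 :: "real^2^3 \<Rightarrow> real" where
  "D1 M = M$1$1 * M$2$2 - M$1$2 * M$2$1"
definition D2 :: "real^2^3 \<Rightarrow> real" where
  "D2 M = M$2$1 * M$3$2 - M$2$2 * M$3$1"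
definition D3 :: "real^2^3 \<Rightarrow> real" where
  "D3 M = M$1$1 * M$3$2 - M$1$2 * M$3$1"

text \<open>zeta_j for j = 1,2,3,4 (index type 4, where 4 = 0).\<close>
definition zeta :: "(real \<Rightarrow> real) \<Rightarrow> real \<Rightarrow> real \<Rightarrow> real \<Rightarrow> real \<Rightarrow> 4 \<Rightarrow> real^2^3" where
  "zeta a al1 al2 s0 t0 j =
     (if j = 1 then P1 a al1 al2 (al1 + s0) al2
      else if j = 2 then P1 a al1 al2 (al1 - s0) al2
      else if j = 3 then P1 a al1 al2 al1 (al2 + t0)
      else P1 a al1 al2 al1 (al2 - t0))"

definition Amat :: "(real \<Rightarrow> real) \<Rightarrow> real \<Rightarrow> real \<Rightarrow> real \<Rightarrow> real \<Rightarrow> real^4^4" where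
  "Amat a al1 al2 s0 t0 = (\<chi> i j. (vector [D1 (zeta a al1 al2 s0 t0 j), D2 (zeta a al1 al2 s0 t0 j),
                                    D3 (zeta a al1 al2 s0 t0 j), 1] :: real^4) $ i)"

definition Lmap :: "(real \<Rightarrow> real) \<Rightarrow> real \<Rightarrow> real \<Rightarrow> real \<Rightarrow> real \<Rightarrow> real \<Rightarrow> real^4 \<Rightarrow> real^4" where
  "Lmap a al1 al2 s0 t0 \<epsilon> \<gamma> = Amat a al1 al2 s0 t0 *v \<gamma> - vector [0, 0, 0, \<epsilon>]"

definition Qmap :: "(real \<Rightarrow> real) \<Rightarrow> real \<Rightarrow> real \<Rightarrow> real \<Rightarrow> real \<Rightarrow> real^4 \<Rightarrow> real^4" where
  "Qmap a al1 al2 s0 t0 \<gamma> =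
     (let Z = (\<Sum>j\<in>UNIV. (\<gamma> $ j) *\<^sub>R zeta a al1 al2 s0 t0 j) in vector [D1 Z, D2 Z, D3 Z, 0])"

definition Gmap :: "(real \<Rightarrow> real) \<Rightarrow> real \<Rightarrow> real \<Rightarrow> real \<Rightarrow> real \<Rightarrow> real \<Rightarrow> real^4 \<Rightarrow> real^4" where
  "Gmap a al1 al2 s0 t0 \<epsilon> \<gamma> = Lmap a al1 al2 s0 t0 \<epsilon> \<gamma> - Qmap a al1 al2 s0 t0 \<gamma>"

end

theory Submission
  imports Defs
begin

lemma vector_4 [simp]:
 "(vector [x,y,z,w] ::('a::zero)^4)$1 = x"
 "(vector [x,y,z,w] ::('a::zero)^4)$2 = y"
 "(vector [x,y,z,w] ::('a::zero)^4)$3 = z"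
 "(vector [x,y,z,w] ::('a::zero)^4)$4 = w"
  unfolding vector_def by simp_all

lemma Gmap_eval:
  fixes a :: "real \<Rightarrow> real"
  assumes bp_def: "bp = a (al2 + t) - a al2" and bm_def: "bm = a al2 - a (al2 - t)"
    and Gp_def: "Gp = Fint a (al2 + t) - Fint a al2 - a al2 * t"
    and Gm_def: "Gm = Fint a (al2 - t) - Fint a al2 + a al2 * t"
  shows "Gmap a al1 al2 s t \<epsilon> (vector [p/2, p/2, x, y]) =
    vector [p * s^2 - t*(bp*x+bm*y) + t*(x-y)*(x*bp - y*bm),
            x*bp*Gp - y*bm*Gm - (x*bp-y*bm)*(p * s^2/2 + x*Gp + y*Gm), 0, p+x+y-\<epsilon>]"
  unfolding vec_eq_iff forall_4
  by (simp add: Gmap_def Lmap_def Qmap_def Amat_def matrix_vector_mult_def sum_4 zeta_def P1_def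
      D1_def D2_def D3_def bp_def bm_def Gp_def Gm_def algebra_simps power2_eq_square power3_eq_cube)



lemma alg_quad: fixes m S A B :: real assumes "S > 0"
  shows "(2*m/S)*A - (2*m/S)^2*B = m*(2*A*S - 4*m*B)/S^2"
  using assms by (simp add: field_simps power2_eq_square)
lemma alg_eq1: fixes t U r s bp bm :: real assumes "s > 0" "bp > 0" "bm > 0"
  shows "(t*U*(1 + r - U*((1/bp - r/bm)*(1-r)))/s^2) * s^2 - t*(bp*(U/bp)+bm*(U*r/bm))
     + t*(U/bp - U*r/bm)*((U/bp)*bp - (U*r/bm)*bm) = 0"
  using assms by (simp add: field_simps power2_eq_square)
lemma alg_m: fixes t U r s bp bm Gp Gm :: real assumes "s > 0" "bp > 0" "bm > 0"
  shows "(t*U*(1 + r - U*((1/bp - r/bm)*(1-r)))/s^2) * s^2/2 + (U/bp)*Gp + (U*r/bm)*Gm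
     = U*(t*(1 + r)/2 + Gp/bp + r * Gm/bm) - U^2 * (t*((1/bp - r/bm)*(1-r))/2)"
  using assms by (simp add: field_simps power2_eq_square)

lemma ev_pos:
  fixes f :: "real \<Rightarrow> real"
  assumes "isCont f 0" "f 0 > 0"
  shows "eventually (\<lambda>m. f m > 0) (nhds 0)"
proof -
  have "(f \<longlongrightarrow> f 0) (nhds 0)" using assms(1) isCont_def tendsto_at_iff_tendsto_nhds by blast
  then show ?thesis using assms(2) order_tendstoD(1) by blast
qed

lemma core:
 fixes s t bp bm Gp Gm :: real
 assumes pos: "s>0" "t>0" "bp>0" "bm>0" "Gp>0" "Gm>0"
 shows "\<exists>\<epsilon>0>0. \<epsilon>0<1 \<and> (\<forall>\<epsilon>. 0<\<epsilon> \<and> \<epsilon>\<le>\<epsilon>0 \<longrightarrow> (\<exists>p x y. 0\<le>p \<and> 0\<le>x \<and> 0\<le>y \<and>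
   p * s^2 - t*(bp*x+bm*y) + t*(x-y)*(x*bp - y*bm) = 0 \<and>
   x*bp*Gp - y*bm*Gm - (x*bp-y*bm)*(p * s^2/2 + x*Gp + y*Gm) = 0 \<and> p+x+y = \<epsilon>))"
proof -
  define \<rho> where "\<rho> = (\<lambda>m::real. (Gp - m)/(Gm - m))"
  define A where "A = (\<lambda>m. t*(1 + \<rho> m)/2 + Gp/bp + \<rho> m * Gm/bm)"
  define K where "K = (\<lambda>m. (1/bp - \<rho> m/bm)*(1 - \<rho> m))"
  define B where "B = (\<lambda>m. t * K m / 2)"
  define D where "D = (\<lambda>m. (A m)^2 - 4 * B m * m)"
  define U where "U = (\<lambda>m. 2*m/(A m + sqrt (D m)))"
  define P where "P = (\<lambda>m. t * U m * (1 + \<rho> m - U m * K m) / s^2)"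
  define X where "X = (\<lambda>m. U m / bp)"
  define Y where "Y = (\<lambda>m. U m * \<rho> m / bm)"
  define E where "E = (\<lambda>m. P m + X m + Y m)"
  have \<rho>0: "\<rho> 0 > 0" using pos by (simp add: \<rho>_def)
  have A0: "A 0 > 0" using pos \<rho>0 by (simp add: A_def add_pos_nonneg pos_add_strict)
  have D0: "D 0 = (A 0)^2" by (simp add: D_def)
  have sD0: "sqrt (D 0) = A 0" using A0 D0 by simp
  have U0: "U 0 = 0" by (simp add: U_def)
  have c\<rho>: "isCont \<rho> 0" unfolding \<rho>_def using pos by (auto intro!: continuous_intros)
  have cA: "isCont A 0" unfolding A_def using pos by (auto intro!: continuous_intros c\<rho>)
  have cK: "isCont K 0" unfolding K_def using pos by (auto intro!: continuous_intros c\<rho>)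
  have cB: "isCont B 0" unfolding B_def by (auto intro!: continuous_intros cK)
  have cD: "isCont D 0" unfolding D_def by (auto intro!: continuous_intros cA cB)
  have cU: "isCont U 0" unfolding U_def using A0 sD0
    by (auto intro!: continuous_intros cA cD)
  have e1: "eventually (\<lambda>m. Gm - m > 0) (nhds 0)" using pos by (intro ev_pos) (auto intro!: continuous_intros)
  have e2: "eventually (\<lambda>m. Gp - m > 0) (nhds 0)" using pos by (intro ev_pos) (auto intro!: continuous_intros)
  have e3: "eventually (\<lambda>m. D m > 0) (nhds 0)" using A0 D0 cD by (intro ev_pos) auto
  have e4: "eventually (\<lambda>m. A m + sqrt (D m) > 0) (nhds 0)" using A0 sD0 cD cA
    by (intro ev_pos) (auto intro!: continuous_intros)
  have e5: "eventually (\<lambda>m. 1 + \<rho> m - U m * K m > 0) (nhds 0)" using \<rho>0 U0 cK cU c\<rho>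
    by (intro ev_pos) (auto intro!: continuous_intros)
  have "eventually (\<lambda>m. Gm - m > 0 \<and> Gp - m > 0 \<and> D m > 0 \<and> A m + sqrt (D m) > 0 \<and>
      1 + \<rho> m - U m * K m > 0) (nhds (0::real))"
    using eventually_conj[OF e1 eventually_conj[OF e2 eventually_conj[OF e3 eventually_conj[OF e4 e5]]]] .
  then obtain d where d: "d > 0" and hd: "\<And>m. dist m 0 < d \<Longrightarrow> Gm - m > 0 \<and> Gp - m > 0 \<and> D m > 0 \<and> A m + sqrt (D m) > 0 \<and>
      1 + \<rho> m - U m * K m > 0"
    unfolding eventually_nhds_metric by blast
  define m1 where "m1 = d/2"
  have m1: "m1 > 0" using d by (simp add: m1_def)
  have H: "Gm - m > 0 \<and> Gp - m > 0 \<and> D m > 0 \<and> A m + sqrt (D m) > 0 \<and> 1 + \<rho> m - U m * K m > 0"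
    if "m \<in> {0..m1}" for m using that hd[of m] d by (auto simp: m1_def dist_real_def)
  have nonneg: "P m \<ge> 0 \<and> X m \<ge> 0 \<and> Y m \<ge> 0 \<and> U m \<ge> 0" if "m \<in> {0..m1}" for m
  proof -
    from H[OF that] have h: "Gm - m > 0" "Gp - m > 0" "A m + sqrt (D m) > 0" "1 + \<rho> m - U m * K m > 0" by auto
    have "U m \<ge> 0" using h that by (simp add: U_def)
    moreover have "\<rho> m > 0" using h by (simp add: \<rho>_def)
    ultimately show ?thesis using h pos by (simp add: P_def X_def Y_def)
  qed
  have cont: "continuous_on {0..m1} E"
  proof -
    have nz1: "\<And>m. m \<in> {0..m1} \<Longrightarrow> Gm - m \<noteq> 0" using H by force
    have nz2: "\<And>m. m \<in> {0..m1} \<Longrightarrow> A m + sqrt (D m) \<noteq> 0" using H by force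
    have "continuous_on {0..m1} \<rho>" unfolding \<rho>_def by (intro continuous_intros) (use nz1 in auto)
    then have "continuous_on {0..m1} A" "continuous_on {0..m1} K"
      unfolding A_def K_def using pos by (auto intro!: continuous_intros)
    then have "continuous_on {0..m1} D" unfolding D_def B_def by (auto intro!: continuous_intros)
    with \<open>continuous_on {0..m1} A\<close> have "continuous_on {0..m1} U" unfolding U_def
      by (intro continuous_intros) (use nz2 in auto)
    then show ?thesis unfolding E_def P_def X_def Y_def using pos \<open>continuous_on {0..m1} \<rho>\<close> \<open>continuous_on {0..m1} K\<close>
      by (auto intro!: continuous_intros)
  qed
  have E0: "E 0 = 0" by (simp add: E_def P_def X_def Y_def U0)
  have Em1: "E m1 > 0"
  proof -
    have "U m1 > 0" using H[of m1] m1 by (simp add: U_def)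
    then have "X m1 > 0" using pos by (simp add: X_def)
    then show ?thesis using nonneg[of m1] m1 by (simp add: E_def)
  qed
  define \<epsilon>0 where "\<epsilon>0 = min (E m1) (1/2)"
  have "\<epsilon>0 > 0" "\<epsilon>0 < 1" using Em1 by (auto simp: \<epsilon>0_def)
  moreover have "\<exists>p x y. 0\<le>p \<and> 0\<le>x \<and> 0\<le>y \<and>
   p * s^2 - t*(bp*x+bm*y) + t*(x-y)*(x*bp - y*bm) = 0 \<and>
   x*bp*Gp - y*bm*Gm - (x*bp-y*bm)*(p * s^2/2 + x*Gp + y*Gm) = 0 \<and> p+x+y = \<epsilon>"
    if eps: "0 < \<epsilon>" "\<epsilon> \<le> \<epsilon>0" for \<epsilon>
  proof -
    obtain m where m: "0 \<le> m" "m \<le> m1" "E m = \<epsilon>"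
      using IVT'[of E 0 \<epsilon> m1] E0 eps cont m1 by (auto simp: \<epsilon>0_def)
    then have mi: "m \<in> {0..m1}" by auto
    from H[OF mi] have h: "Gm - m > 0" "Gp - m > 0" "D m > 0" "A m + sqrt (D m) > 0" by auto
    have sq: "sqrt (D m) ^ 2 = D m" using h by simp
    have quad: "U m * A m - (U m)^2 * B m = m"
    proof -
      have "U m * A m - (U m)^2 * B m = m * (2*A m*(A m + sqrt (D m)) - 4*m*B m) / (A m + sqrt (D m))^2"
        unfolding U_def by (rule alg_quad[OF h(4)])
      also have "2*A m*(A m + sqrt (D m)) - 4*m*B m = (A m + sqrt (D m))^2"
        using sq by (simp add: D_def power2_eq_square algebra_simps)
      finally show ?thesis using h by simp
    qed
    have \<rho>m: "\<rho> m * (Gm - m) = Gp - m" using h by (simp add: \<rho>_def)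
    have eq1: "P m * s^2 - t*(bp*X m+bm*Y m) + t*(X m-Y m)*(X m*bp - Y m*bm) = 0"
      unfolding P_def X_def Y_def K_def by (rule alg_eq1[OF pos(1,3,4)])
    have mdef: "P m * s^2/2 + X m*Gp + Y m*Gm = m"
    proof -
      have "P m * s^2/2 + X m*Gp + Y m*Gm = U m * A m - (U m)^2 * B m"
        unfolding P_def X_def Y_def A_def B_def K_def by (rule alg_m[OF pos(1,3,4)])
      then show ?thesis using quad by simp
    qed
    have eq2: "X m*bp*Gp - Y m*bm*Gm - (X m*bp-Y m*bm)*(P m * s^2/2 + X m*Gp + Y m*Gm) = 0"
    proof -
      have "X m*bp*Gp - Y m*bm*Gm - (X m*bp-Y m*bm)*m = U m * ((Gp - m) - \<rho> m * (Gm - m))"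
        using pos by (simp add: X_def Y_def algebra_simps)
      then show ?thesis using mdef \<rho>m by simp
    qed
    show ?thesis using nonneg[OF mi] eq1 eq2 m(3) by (intro exI[of _ "P m"] exI[of _ "X m"] exI[of _ "Y m"]) (simp add: E_def)
  qed
  ultimately show ?thesis by blast
qed


lemma Fint_deriv:
  fixes a :: "real \<Rightarrow> real"
  assumes ca: "continuous_on UNIV a"
  shows "DERIV (Fint a) x :> a x"
proof -
  define c where "c = min x 0 - 1"
  have rep: "Fint a v = integral {c..v} a - integral {c..0} a" if "v \<in> {c<..}" for v
  proof (cases "0 \<le> v")
    case True
    have "a integrable_on {c..v}" by (intro integrable_continuous_real continuous_on_subset[OF ca]) auto
    then have "integral {c..0} a + integral {0..v} a = integral {c..v} a"
      by (intro Henstock_Kurzweil_Integration.integral_combine) (use True c_def in auto)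
    then show ?thesis using True by (simp add: Fint_def)
  next
    case False
    have "a integrable_on {c..0}" by (intro integrable_continuous_real continuous_on_subset[OF ca]) auto
    then have "integral {c..v} a + integral {v..0} a = integral {c..0} a"
      by (intro Henstock_Kurzweil_Integration.integral_combine) (use False c_def that in auto)
    then show ?thesis using False by (simp add: Fint_def)
  qed
  have "((\<lambda>u. integral {c..u} a) has_real_derivative a x) (at x within {c..x+1})"
    using c_def by (intro integral_has_real_derivative continuous_on_subset[OF ca]) auto
  moreover have "at x within {c..x+1} = at x"
    using c_def by (intro at_within_interior) auto
  ultimately have "((\<lambda>u. integral {c..u} a - integral {c..0} a) has_real_derivative a x) (at x)"
    by (auto intro!: derivative_eq_intros)
  then show ?thesis
    by (rule has_field_derivative_transform_within_open[where S="{c<..}"]) (use c_def rep in auto)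
qed

lemma ana:
  fixes a :: "real \<Rightarrow> real" and al2 :: real
  assumes "C2_fun a" and "deriv a al2 > 0"
  shows "\<exists>\<delta>>0. \<forall>t. 0 < t \<and> t < \<delta> \<longrightarrow> a (al2 + t) - a al2 > 0 \<and> a al2 - a (al2 - t) > 0 \<and>
     Fint a (al2 + t) - Fint a al2 - a al2 * t > 0 \<and> Fint a (al2 - t) - Fint a al2 + a al2 * t > 0"
proof -
  have da: "\<And>x. DERIV a x :> deriv a x" using assms(1) unfolding C2_fun_def
    using DERIV_deriv_iff_real_differentiable by blast
  have ca: "continuous_on UNIV a"
    using da by (meson DERIV_isCont continuous_at_imp_continuous_on)
  have "isCont (deriv a) al2" using assms(1) unfolding C2_fun_def
    using differentiable_imp_continuous_within by blast
  then have "((deriv a) \<longlongrightarrow> deriv a al2) (nhds al2)"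
    using isCont_def tendsto_at_iff_tendsto_nhds by blast
  then have "eventually (\<lambda>x. deriv a x > 0) (nhds al2)" using assms(2) order_tendstoD(1) by blast
  then obtain d where d: "d > 0" and hd: "\<And>x. dist x al2 < d \<Longrightarrow> deriv a x > 0"
    unfolding eventually_nhds_metric by blast
  have inc: "a v - a u > 0" if uv: "u < v" "al2 - d < u" "v < al2 + d" for u v
  proof -
    obtain z where z: "u < z" "z < v" "a v - a u = (v - u) * deriv a z" using MVT2[OF uv(1), of a "deriv a"] da by blast
    have "deriv a z > 0" using hd[of z] z uv by (auto simp: dist_real_def)
    then show ?thesis using z uv by simp
  qed
  define g where "g = (\<lambda>v. Fint a v - a al2 * v)"
  have dg: "\<And>x. DERIV g x :> a x - a al2" unfolding g_def
    by (auto intro!: derivative_eq_intros Fint_deriv[OF ca])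
  have "a (al2 + t) - a al2 > 0 \<and> a al2 - a (al2 - t) > 0 \<and>
     Fint a (al2 + t) - Fint a al2 - a al2 * t > 0 \<and> Fint a (al2 - t) - Fint a al2 + a al2 * t > 0"
    if t: "0 < t" "t < d" for t
  proof (intro conjI)
    show "a (al2 + t) - a al2 > 0" using inc[of al2 "al2 + t"] t d by simp
    show "a al2 - a (al2 - t) > 0" using inc[of "al2 - t" al2] t d by simp
    obtain z where z: "al2 < z" "z < al2 + t" "g (al2 + t) - g al2 = (al2 + t - al2) * (a z - a al2)"
      using MVT2[of al2 "al2 + t" g "\<lambda>x. a x - a al2"] dg t by auto
    have "a z - a al2 > 0" using inc[of al2 z] z t d by simp
    then have "g (al2 + t) - g al2 > 0" using z t by simp
    then show "Fint a (al2 + t) - Fint a al2 - a al2 * t > 0" by (simp add: g_def algebra_simps)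
    obtain z where z: "al2 - t < z" "z < al2" "g al2 - g (al2 - t) = (al2 - (al2 - t)) * (a z - a al2)"
      using MVT2[of "al2 - t" al2 g "\<lambda>x. a x - a al2"] dg t by auto
    have "a al2 - a z > 0" using inc[of z al2] z t d by simp
    then have "t * (a z - a al2) < 0" using t by (intro mult_pos_neg) auto
    then have "g (al2 - t) - g al2 > 0" using z t by simp
    then show "Fint a (al2 - t) - Fint a al2 + a al2 * t > 0" by (simp add: g_def algebra_simps)
  qed
  then show ?thesis using d by blast
qed

theorem lemma17:
  fixes a :: "real \<Rightarrow> real" and al2 :: real
  assumes "C2_fun a" and "deriv a al2 > 0"
  shows "\<exists>\<delta>>0. \<forall>al1 s0 t0. 0 < s0 \<and> s0 < \<delta> \<and> 0 < t0 \<and> t0 < \<delta> \<longrightarrow>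
           (\<exists>\<epsilon>0. 0 < \<epsilon>0 \<and> \<epsilon>0 < 1 \<and>
              (\<forall>\<epsilon>. 0 < \<epsilon> \<and> \<epsilon> \<le> \<epsilon>0 \<longrightarrow>
                 (\<exists>\<gamma>::real^4. (\<forall>j. 0 \<le> \<gamma> $ j) \<and> Gmap a al1 al2 s0 t0 \<epsilon> \<gamma> = 0)))"
proof -
  obtain d where d: "d > 0" and hd: "\<And>t. 0 < t \<and> t < d \<Longrightarrow> a (al2 + t) - a al2 > 0 \<and> a al2 - a (al2 - t) > 0 \<and>
     Fint a (al2 + t) - Fint a al2 - a al2 * t > 0 \<and> Fint a (al2 - t) - Fint a al2 + a al2 * t > 0"
    using ana[OF assms] by blast
  have "\<exists>\<epsilon>0. 0 < \<epsilon>0 \<and> \<epsilon>0 < 1 \<and>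
              (\<forall>\<epsilon>. 0 < \<epsilon> \<and> \<epsilon> \<le> \<epsilon>0 \<longrightarrow>
                 (\<exists>\<gamma>::real^4. (\<forall>j. 0 \<le> \<gamma> $ j) \<and> Gmap a al1 al2 s0 t0 \<epsilon> \<gamma> = 0))"
    if st: "0 < s0" "0 < t0" "t0 < d" for al1 s0 t0
  proof -
    define bp where "bp = a (al2 + t0) - a al2"
    define bm where "bm = a al2 - a (al2 - t0)"
    define Gp where "Gp = Fint a (al2 + t0) - Fint a al2 - a al2 * t0"
    define Gm where "Gm = Fint a (al2 - t0) - Fint a al2 + a al2 * t0"
    have pos: "bp > 0" "bm > 0" "Gp > 0" "Gm > 0" using hd[of t0] st by (auto simp: bp_def bm_def Gp_def Gm_def)
    obtain \<epsilon>0 where e0: "\<epsilon>0 > 0" "\<epsilon>0 < 1" and he: "\<And>\<epsilon>. 0<\<epsilon> \<and> \<epsilon>\<le>\<epsilon>0 \<Longrightarrow> (\<exists>p x y. 0\<le>p \<and> 0\<le>x \<and> 0\<le>y \<and>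
   p * s0^2 - t0*(bp*x+bm*y) + t0*(x-y)*(x*bp - y*bm) = 0 \<and>
   x*bp*Gp - y*bm*Gm - (x*bp-y*bm)*(p * s0^2/2 + x*Gp + y*Gm) = 0 \<and> p+x+y = \<epsilon>)"
      using core[OF st(1,2) pos] by blast
    have "\<exists>\<gamma>::real^4. (\<forall>j. 0 \<le> \<gamma> $ j) \<and> Gmap a al1 al2 s0 t0 \<epsilon> \<gamma> = 0"
      if eps: "0 < \<epsilon>" "\<epsilon> \<le> \<epsilon>0" for \<epsilon>
    proof -
      obtain p x y where pxy: "0\<le>p" "0\<le>x" "0\<le>y"
        "p * s0^2 - t0*(bp*x+bm*y) + t0*(x-y)*(x*bp - y*bm) = 0"
        "x*bp*Gp - y*bm*Gm - (x*bp-y*bm)*(p * s0^2/2 + x*Gp + y*Gm) = 0" "p+x+y = \<epsilon>"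
        using he[of \<epsilon>] eps by blast
      have G: "Gmap a al1 al2 s0 t0 \<epsilon> (vector [p/2, p/2, x, y]) =
        vector [p * s0^2 - t0*(bp*x+bm*y) + t0*(x-y)*(x*bp - y*bm),
            x*bp*Gp - y*bm*Gm - (x*bp-y*bm)*(p * s0^2/2 + x*Gp + y*Gm), 0, p+x+y-\<epsilon>]"
        by (rule Gmap_eval[OF bp_def bm_def Gp_def Gm_def])
      show ?thesis
      proof (intro exI conjI)
        show "\<forall>j. 0 \<le> (vector [p/2, p/2, x, y] :: real^4) $ j" using pxy unfolding forall_4 by simp
        show "Gmap a al1 al2 s0 t0 \<epsilon> (vector [p/2, p/2, x, y]) = 0"
          unfolding G using pxy by (simp add: vec_eq_iff forall_4)
      qed
    qed
    then show ?thesis using e0 by blast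
  qed
  then show ?thesis using d by blast
qed

end
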